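(* Let $U$ be a nonempty finite set, $R$ a relation on $U$, and $M(R)$ the relation matroid induced by $R$. Then $cl_{M(R)}(X)=H_R(X)$ for all $X\subseteq U$ if and only if $R$ is an equivalence relation (reflexive, symmetric and transitive).
   Context: For $x\in U$, $RS_R(x)=\{y\in U:(x,y)\in R\}$. $\mathbf{I}(R)=\{X\subseteq U: \forall x,y\in X,\ x\neq y \Rightarrow RS_R(x)\neq RS_R(y)\}$; this is the family of independent sets of a matroid $M(R)=(U,\mathbf{I}(R))$, called the relation matroid induced by $R$. For a matroid $M$ with rank function $r_M(X)=\max\{|I|:I\subseteq X, I \text{ independent}\}$, the closure operator is $cl_M(X)=\{u\in U: r_M(X\cup\{u\})=r_M(X)\}$. The upper approximation operator of $R$ is $H_R(X)=\{x\in U: RS_R(x)\cap X\neq\emptyset\}$ for $X\subseteq U$. *)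

theory Defs
  imports Main
begin

definition RS :: "('a \<times> 'a) set \<Rightarrow> 'a \<Rightarrow> 'a set" where
  "RS R x = {y. (x, y) \<in> R}"

definition rel_indep :: "'a set \<Rightarrow> ('a \<times> 'a) set \<Rightarrow> 'a set set" where
  "rel_indep U R = {X. X \<subseteq> U \<and> (\<forall>x\<in>X. \<forall>y\<in>X. x \<noteq> y \<longrightarrow> RS R x \<noteq> RS R y)}"

definition mat_rank :: "'a set set \<Rightarrow> 'a set \<Rightarrow> nat" where
  "mat_rank I X = Max {card Y | Y. Y \<subseteq> X \<and> Y \<in> I}"

definition mat_cl :: "'a set \<Rightarrow> 'a set set \<Rightarrow> 'a set \<Rightarrow> 'a set" where
  "mat_cl U I X = {u \<in> U. mat_rank I (X \<union> {u}) = mat_rank I X}"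

definition upper_approx :: "'a set \<Rightarrow> ('a \<times> 'a) set \<Rightarrow> 'a set \<Rightarrow> 'a set" where
  "upper_approx U R X = {x \<in> U. RS R x \<inter> X \<noteq> {}}"

end

theory Submission
  imports Defs
begin

lemma rep_exists:
  obtains Y where "Y \<subseteq> X" "inj_on f Y" "f ` Y = f ` X"
proof -
  define g where "g v = (SOME x. x \<in> X \<and> f x = v)" for v
  have g: "g v \<in> X \<and> f (g v) = v" if "v \<in> f ` X" for v
    unfolding g_def using that by (rule_tac someI_ex) blast
  have "g ` (f ` X) \<subseteq> X" using g by blast
  moreover have "inj_on f (g ` (f ` X))"
    by (rule inj_onI) (metis g imageE)
  moreover have "f ` (g ` (f ` X)) = f ` X"
  proof
    show "f ` g ` f ` X \<subseteq> f ` X" using g by auto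
    show "f ` X \<subseteq> f ` g ` f ` X"
    proof
      fix v assume "v \<in> f ` X"
      then have "v = f (g v)" using g by auto
      then show "v \<in> f ` g ` f ` X" using \<open>v \<in> f ` X\<close> by blast
    qed
  qed
  ultimately show ?thesis by (rule that)
qed

lemma rank_eq:
  assumes "finite X" "X \<subseteq> U"
  shows "mat_rank (rel_indep U R) X = card (RS R ` X)"
proof -
  let ?S = "{card Y | Y. Y \<subseteq> X \<and> Y \<in> rel_indep U R}"
  have fin: "finite ?S"
  proof -
    have "?S \<subseteq> card ` Pow X" by auto
    then show ?thesis using assms(1) finite_subset by blast
  qed
  obtain Y where Y: "Y \<subseteq> X" "inj_on (RS R) Y" "RS R ` Y = RS R ` X"
    using rep_exists by blast
  have "Y \<in> rel_indep U R" using Y assms(2) unfolding rel_indep_def inj_on_def by blast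
  then have mem: "card (RS R ` X) \<in> ?S" using Y card_image[OF Y(2)] by (metis (mono_tags, lifting) mem_Collect_eq)
  have le: "c \<le> card (RS R ` X)" if "c \<in> ?S" for c
  proof -
    obtain Z where Z: "c = card Z" "Z \<subseteq> X" "Z \<in> rel_indep U R" using \<open>c \<in> ?S\<close> by blast
    have "inj_on (RS R) Z" using Z(3) unfolding rel_indep_def inj_on_def by blast
    then have "card Z = card (RS R ` Z)" by (simp add: card_image)
    also have "\<dots> \<le> card (RS R ` X)"
      using Z(2) assms(1) by (intro card_mono) auto
    finally show ?thesis using Z by simp
  qed
  show ?thesis unfolding mat_rank_def
    by (rule Max_eqI[OF fin le mem])
qed

lemma cl_char:
  assumes "finite U" "X \<subseteq> U"
  shows "mat_cl U (rel_indep U R) X = {u \<in> U. RS R u \<in> RS R ` X}"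
proof -
  have fX: "finite X" using assms finite_subset by blast
  have "mat_rank (rel_indep U R) (X \<union> {u}) = mat_rank (rel_indep U R) X \<longleftrightarrow> RS R u \<in> RS R ` X"
    if "u \<in> U" for u
  proof -
    have "mat_rank (rel_indep U R) (X \<union> {u}) = card (insert (RS R u) (RS R ` X))"
      using rank_eq[of "X \<union> {u}" U R] fX assms that by simp
    moreover have "mat_rank (rel_indep U R) X = card (RS R ` X)" using rank_eq fX assms by blast
    ultimately show ?thesis using fX by (simp add: card_insert_if)
  qed
  then show ?thesis unfolding mat_cl_def by auto
qed

theorem mainTheorem11:
  fixes U :: "'a set" and R :: "('a \<times> 'a) set"
  assumes "finite U" and "U \<noteq> {}" and "R \<subseteq> U \<times> U"
  shows "(\<forall>X. X \<subseteq> U \<longrightarrow> mat_cl U (rel_indep U R) X = upper_approx U R X)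
         \<longleftrightarrow> equiv U R"
proof
  assume H: "\<forall>X. X \<subseteq> U \<longrightarrow> mat_cl U (rel_indep U R) X = upper_approx U R X"
  have key: "x \<in> U \<Longrightarrow> y \<in> U \<Longrightarrow> (x, y) \<in> R \<longleftrightarrow> RS R x = RS R y" for x y
  proof -
    assume xy: "x \<in> U" "y \<in> U"
    have "mat_cl U (rel_indep U R) {y} = upper_approx U R {y}" using H xy by auto
    then have "{u \<in> U. RS R u = RS R y} = {u \<in> U. y \<in> RS R u}"
      using cl_char[OF assms(1), of "{y}" R] xy unfolding upper_approx_def by auto
    then have "RS R x = RS R y \<longleftrightarrow> y \<in> RS R x" using xy by blast
    then show ?thesis unfolding RS_def by auto
  qed
  have refl: "x \<in> U \<Longrightarrow> (x, x) \<in> R" for x using key by blast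
  show "equiv U R"
  proof (rule equivI)
    show "refl_on U R" unfolding refl_on_def using refl assms(3) by blast
    show "sym R" unfolding sym_def
    proof (intro allI impI)
      fix x y assume "(x, y) \<in> R"
      then have "x \<in> U" "y \<in> U" "RS R x = RS R y" using key assms(3) by blast+
      then show "(y, x) \<in> R" using refl[of x] unfolding RS_def by auto
    qed
    show "trans R" unfolding trans_def
    proof (intro allI impI)
      fix x y z assume "(x, y) \<in> R" "(y, z) \<in> R"
      then have "RS R x = RS R y" using key assms(3) by blast
      then show "(x, z) \<in> R" using \<open>(y, z) \<in> R\<close> unfolding RS_def by auto
    qed
  qed (use assms(3) in blast)
next
  assume E: "equiv U R"
  have key: "x \<in> U \<Longrightarrow> y \<in> U \<Longrightarrow> (x, y) \<in> R \<longleftrightarrow> RS R x = RS R y" for x y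
  proof -
    assume xy: "x \<in> U" "y \<in> U"
    have "R `` {x} = R `` {y} \<longleftrightarrow> (x, y) \<in> R" using equiv_class_eq_iff[OF E, of x y] xy by blast
    moreover have "RS R z = R `` {z}" for z unfolding RS_def by blast
    ultimately show ?thesis by simp
  qed
  show "\<forall>X. X \<subseteq> U \<longrightarrow> mat_cl U (rel_indep U R) X = upper_approx U R X"
  proof (intro allI impI)
    fix X assume X: "X \<subseteq> U"
    show "mat_cl U (rel_indep U R) X = upper_approx U R X"
    proof -
      have "RS R u \<in> RS R ` X \<longleftrightarrow> RS R u \<inter> X \<noteq> {}" if u: "u \<in> U" for u
      proof
        assume "RS R u \<in> RS R ` X"
        then obtain x where "x \<in> X" "RS R u = RS R x" by blast
        then have "(u, x) \<in> R" using key u X by blast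
        then show "RS R u \<inter> X \<noteq> {}" using \<open>x \<in> X\<close> unfolding RS_def by blast
      next
        assume "RS R u \<inter> X \<noteq> {}"
        then obtain x where "x \<in> X" "(u, x) \<in> R" unfolding RS_def by blast
        then have "RS R u = RS R x" using key u X by blast
        then show "RS R u \<in> RS R ` X" using \<open>x \<in> X\<close> by blast
      qed
      then show ?thesis unfolding cl_char[OF assms(1) X] upper_approx_def by blast
    qed
  qed
qed

end
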